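(* Let $G$ be a graph and let $n\geq 2$. Then the set of distinct Laplacian eigenvalues of the blow-up $\uparrow^{n}G$ is $$\sigma\left(\uparrow^{n}G\right)=n\cdot\sigma(G)\cup \{n\, d_u:u\in V(G)\}.$$ Moreover, for any vertex $u$ of $G$ and any $j\in\mathbb{Z}_n$, $$\sigma_{(j,u)}\left(\uparrow^{n}G\right)=n\cdot\sigma_u(G)\cup\{n\, d_u\}.$$
   Context: All graphs are simple, undirected and unweighted. For a graph $G$ with vertex set $V$, $d_u$ is the degree of vertex $u$, and $L=D-A$ is its Laplacian matrix ($D$ the diagonal degree matrix, $A$ the adjacency matrix). $\sigma(G)$ denotes the set of distinct Laplacian eigenvalues of $G$. If $L=\sum_{\lambda\in\sigma(G)}\lambda E_\lambda$ is the spectral decomposition ($E_\lambda$ the orthogonal projection onto the $\lambda$-eigenspace), the eigenvalue support of a vertex $u$ is $\sigma_u(G)=\{\lambda\in\sigma(G): E_\lambda\mathbf{e}_u\neq \mathbf{0}\}$. For a set $S$ of numbers, $n\cdot S=\{ns:s\in S\}$. The blow-up $\uparrow^{n}G$ of $n$ copies of $G$ is the graph with vertex set $\mathbb{Z}_n\times V$, in which $(l,u)$ and $(m,v)$ are adjacent if and only if $u$ and $v$ are adjacent in $G$. *)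

theory Defs
  imports Complex_Main
begin

definition simple_graph :: "'a set \<Rightarrow> ('a \<Rightarrow> 'a \<Rightarrow> bool) \<Rightarrow> bool" where
  "simple_graph V E \<longleftrightarrow> finite V \<and> (\<forall>u v. E u v \<longrightarrow> u \<in> V \<and> v \<in> V)
     \<and> (\<forall>u v. E u v \<longrightarrow> E v u) \<and> (\<forall>u. \<not> E u u)"

definition degree :: "'a set \<Rightarrow> ('a \<Rightarrow> 'a \<Rightarrow> bool) \<Rightarrow> 'a \<Rightarrow> nat" where
  "degree V E u = card {v \<in> V. E u v}"

definition laplacian :: "'a set \<Rightarrow> ('a \<Rightarrow> 'a \<Rightarrow> bool) \<Rightarrow> 'a \<Rightarrow> 'a \<Rightarrow> real" where
  "laplacian V E u v = (if u = v then real (degree V E u) else 0) - (if E u v then 1 else 0)"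

definition vecs :: "'a set \<Rightarrow> ('a \<Rightarrow> real) set" where
  "vecs V = {x. \<forall>w. w \<notin> V \<longrightarrow> x w = 0}"

definition lap_mult :: "'a set \<Rightarrow> ('a \<Rightarrow> 'a \<Rightarrow> bool) \<Rightarrow> ('a \<Rightarrow> real) \<Rightarrow> ('a \<Rightarrow> real)" where
  "lap_mult V E x = (\<lambda>u. if u \<in> V then (\<Sum>v\<in>V. laplacian V E u v * x v) else 0)"

definition eigenspace :: "'a set \<Rightarrow> ('a \<Rightarrow> 'a \<Rightarrow> bool) \<Rightarrow> real \<Rightarrow> ('a \<Rightarrow> real) set" where
  "eigenspace V E mu = {x \<in> vecs V. lap_mult V E x = (\<lambda>u. mu * x u)}"

definition lap_spectrum :: "'a set \<Rightarrow> ('a \<Rightarrow> 'a \<Rightarrow> bool) \<Rightarrow> real set" where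
  "lap_spectrum V E = {mu. \<exists>x \<in> eigenspace V E mu. x \<noteq> (\<lambda>_. 0)}"

definition vinner :: "'a set \<Rightarrow> ('a \<Rightarrow> real) \<Rightarrow> ('a \<Rightarrow> real) \<Rightarrow> real" where
  "vinner V x y = (\<Sum>v\<in>V. x v * y v)"

definition oproj :: "'a set \<Rightarrow> ('a \<Rightarrow> real) set \<Rightarrow> ('a \<Rightarrow> real) \<Rightarrow> ('a \<Rightarrow> real)" where
  "oproj V W x = (THE p. p \<in> W \<and> (\<forall>w \<in> W. vinner V (\<lambda>v. x v - p v) w = 0))"

definition unit_vec :: "'a \<Rightarrow> ('a \<Rightarrow> real)" where
  "unit_vec u = (\<lambda>v. if v = u then 1 else 0)"

definition eig_support :: "'a set \<Rightarrow> ('a \<Rightarrow> 'a \<Rightarrow> bool) \<Rightarrow> 'a \<Rightarrow> real set" where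
  "eig_support V E u =
     {mu \<in> lap_spectrum V E. oproj V (eigenspace V E mu) (unit_vec u) \<noteq> (\<lambda>_. 0)}"

definition blowup_V :: "nat \<Rightarrow> 'a set \<Rightarrow> (nat \<times> 'a) set" where
  "blowup_V n V = {0..<n} \<times> V"

definition blowup_E :: "nat \<Rightarrow> ('a \<Rightarrow> 'a \<Rightarrow> bool) \<Rightarrow> nat \<times> 'a \<Rightarrow> nat \<times> 'a \<Rightarrow> bool" where
  "blowup_E n E p q \<longleftrightarrow> fst p < n \<and> fst q < n \<and> E (snd p) (snd q)"

end

theory Submission
  imports Defs
begin


lemma vinner_add: "vinner U (\<lambda>v. a v + b v) w = vinner U a w + vinner U b w"
  by (simp add: vinner_def algebra_simps sum.distrib)
lemma vinner_diff: "vinner U (\<lambda>v. a v - b v) w = vinner U a w - vinner U b w"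
  by (simp add: vinner_def algebra_simps sum_subtractf)
lemma vinner_scale: "vinner U (\<lambda>v. c * a v) w = c * vinner U a w"
  by (simp add: vinner_def sum_distrib_left algebra_simps)
lemma vinner_add2: "vinner U w (\<lambda>v. a v + b v) = vinner U w a + vinner U w b"
  by (simp add: vinner_def algebra_simps sum.distrib)
lemma vinner_diff2: "vinner U w (\<lambda>v. a v - b v) = vinner U w a - vinner U w b"
  by (simp add: vinner_def algebra_simps sum_subtractf)
lemma vinner_scale2: "vinner U w (\<lambda>v. c * a v) = c * vinner U w a"
  by (simp add: vinner_def sum_distrib_left algebra_simps)
lemma vinner_sym: "vinner U a b = vinner U b a"
  by (simp add: vinner_def mult.commute)

definition subsp :: "('a \<Rightarrow> real) set \<Rightarrow> bool" where
  "subsp W \<longleftrightarrow> (\<lambda>_. 0) \<in> W \<and> (\<forall>a\<in>W. \<forall>b\<in>W. (\<lambda>v. a v + b v) \<in> W)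
     \<and> (\<forall>c. \<forall>a\<in>W. (\<lambda>v. c * a v) \<in> W)"

lemma subsp_add: "subsp W \<Longrightarrow> a \<in> W \<Longrightarrow> b \<in> W \<Longrightarrow> (\<lambda>v. a v + b v) \<in> W"
  unfolding subsp_def by blast
lemma subsp_scale: "subsp W \<Longrightarrow> a \<in> W \<Longrightarrow> (\<lambda>v. c * a v) \<in> W"
  unfolding subsp_def by blast
lemma subsp_zero: "subsp W \<Longrightarrow> (\<lambda>_. 0) \<in> W"
  unfolding subsp_def by blast

lemma subsp_diff: assumes "subsp W" "a \<in> W" "b \<in> W" shows "(\<lambda>v. a v - b v) \<in> W"
proof -
  have "(\<lambda>v. a v + (-1) * b v) = (\<lambda>v. a v - b v)" by (rule ext) simp
  then show ?thesis using subsp_add[OF assms(1,2) subsp_scale[OF assms(1,3), of "-1"]] by (simp only:)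
qed

lemma vinner_self_zero:
  assumes "finite U" "vinner U d d = 0" "w \<in> U" shows "d w = 0"
proof -
  have s0: "(\<Sum>v\<in>U. d v * d v) = 0" using assms(2) by (simp add: vinner_def)
  have "\<forall>v\<in>U. d v * d v = 0"
    using sum_nonneg_eq_0_iff[OF assms(1), of "\<lambda>v. d v * d v"] s0 by auto
  then show ?thesis using assms(3) by simp
qed

lemma vinner_self_pos:
  assumes "finite U" "w \<in> U" "d w \<noteq> 0" shows "vinner U d d > 0"
proof -
  have "vinner U d d \<ge> 0" by (simp add: vinner_def sum_nonneg)
  moreover have "vinner U d d \<noteq> 0"
  proof
    assume "vinner U d d = 0"
    then have "d w = 0" using vinner_self_zero[OF assms(1) _ assms(2)] by simp
    then show False using assms(3) by simp
  qed
  ultimately show ?thesis by linarith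
qed

lemma proj_unique:
  assumes "finite V" "W \<subseteq> vecs V" "subsp W"
    and "p \<in> W" "\<forall>w\<in>W. vinner V (\<lambda>v. x v - p v) w = 0"
    and "q \<in> W" "\<forall>w\<in>W. vinner V (\<lambda>v. x v - q v) w = 0"
  shows "p = q"
proof -
  define d where "d = (\<lambda>v. p v - q v)"
  have dW: "d \<in> W" unfolding d_def using subsp_diff[OF assms(3,4,6)] by simp
  have "vinner V (\<lambda>v. x v - q v) d - vinner V (\<lambda>v. x v - p v) d = 0"
    using assms dW by simp
  then have "vinner V (\<lambda>v. (x v - q v) - (x v - p v)) d = 0"
    by (simp only: vinner_diff)
  then have "vinner V d d = 0" by (simp add: d_def)
  then have "\<forall>w\<in>V. d w = 0" using vinner_self_zero[OF assms(1)] by blast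
  moreover have "\<forall>w. w \<notin> V \<longrightarrow> d w = 0"
  proof (intro allI impI)
    fix w assume "w \<notin> V"
    have "p \<in> vecs V" "q \<in> vecs V" using assms(2,4,6) by auto
    then show "d w = 0" using \<open>w \<notin> V\<close> unfolding d_def vecs_def by simp
  qed
  ultimately show ?thesis unfolding d_def by (metis eq_iff_diff_eq_0 ext)
qed

lemma oproj_eq:
  assumes "finite V" "W \<subseteq> vecs V" "subsp W"
    and "p \<in> W" "\<forall>w\<in>W. vinner V (\<lambda>v. x v - p v) w = 0"
  shows "oproj V W x = p"
  unfolding oproj_def
  apply (rule the_equality)
  using assms apply blast
  using proj_unique[OF assms(1-3) _ _ assms(4,5)] by blast

lemma proj_exists_aux:
  assumes "finite S"
  shows "finite U \<Longrightarrow> S \<subseteq> U \<Longrightarrow> W \<subseteq> vecs S \<Longrightarrow> subsp W \<Longrightarrow>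
     \<exists>p\<in>W. \<forall>w\<in>W. vinner U (\<lambda>v. x v - p v) w = 0"
  using assms
proof (induction S arbitrary: W x rule: finite_induct)
  case empty
  then have "W = {\<lambda>_. 0}" unfolding vecs_def subsp_def by auto
  then show ?case by (simp add: vinner_def)
next
  case (insert a S)
  define W0 where "W0 = {w\<in>W. w a = 0}"
  have W0v: "W0 \<subseteq> vecs S" using insert.prems unfolding W0_def vecs_def by auto
  have W0s: "subsp W0" using insert.prems(4) unfolding W0_def subsp_def by auto
  have IH: "\<And>y. \<exists>p\<in>W0. \<forall>w\<in>W0. vinner U (\<lambda>v. y v - p v) w = 0"
    using insert.IH[OF insert.prems(1) _ W0v W0s] insert.prems(2) by blast
  show ?case
  proof (cases "\<forall>w\<in>W. w a = 0")
    case True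
    then have "W0 = W" unfolding W0_def by auto
    then show ?thesis using IH by simp
  next
    case False
    then obtain w1 where w1: "w1 \<in> W" "w1 a \<noteq> 0" by auto
    obtain p1 where p1: "p1 \<in> W0" "\<forall>w\<in>W0. vinner U (\<lambda>v. w1 v - p1 v) w = 0" using IH by blast
    define f where "f = (\<lambda>v. w1 v - p1 v)"
    have p1W: "p1 \<in> W" using p1(1) W0_def by simp
    have fW: "f \<in> W" unfolding f_def using subsp_diff[OF insert.prems(4) w1(1) p1W] by simp
    have fa: "f a \<noteq> 0" using p1(1) w1(2) unfolding f_def W0_def by auto
    have forth: "\<forall>w\<in>W0. vinner U f w = 0" using p1 f_def by simp
    have ff: "vinner U f f > 0" using vinner_self_pos[of U a f] insert.prems(1,2) fa by simp
    obtain p0 where p0: "p0 \<in> W0" "\<forall>w\<in>W0. vinner U (\<lambda>v. x v - p0 v) w = 0" using IH by blast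
    define c where "c = vinner U x f / vinner U f f"
    define p where "p = (\<lambda>v. p0 v + c * f v)"
    have p0W: "p0 \<in> W" using p0(1) W0_def by simp
    have pW: "p \<in> W" unfolding p_def using subsp_add[OF insert.prems(4) p0W subsp_scale[OF insert.prems(4) fW]] by simp
    have "vinner U (\<lambda>v. x v - p v) f = vinner U x f - vinner U p0 f - c * vinner U f f"
    proof -
      have "(\<lambda>v. x v - p v) = (\<lambda>v. (x v - p0 v) - c * f v)" unfolding p_def by auto
      then have "vinner U (\<lambda>v. x v - p v) f = vinner U (\<lambda>v. x v - p0 v) f - c * vinner U f f"
        by (simp only: vinner_diff vinner_scale)
      then show ?thesis by (simp only: vinner_diff)
    qed
    also have "vinner U p0 f = 0" using forth p0(1) vinner_sym by metis
    finally have e1: "vinner U (\<lambda>v. x v - p v) f = 0" using ff unfolding c_def by simp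
    have e0: "vinner U (\<lambda>v. x v - p v) w = 0" if "w \<in> W0" for w
    proof -
      have "vinner U (\<lambda>v. (x v - p0 v) - c * f v) w = vinner U (\<lambda>v. x v - p0 v) w - c * vinner U f w"
        by (simp only: vinner_diff vinner_scale)
      moreover have "(\<lambda>v. x v - p v) = (\<lambda>v. (x v - p0 v) - c * f v)" unfolding p_def by auto
      ultimately show ?thesis using p0 forth that by simp
    qed
    have "\<forall>w\<in>W. vinner U (\<lambda>v. x v - p v) w = 0"
    proof
      fix w assume w: "w \<in> W"
      define k where "k = w a / f a"
      define w0 where "w0 = (\<lambda>v. w v - k * f v)"
      have "(\<lambda>v. k * f v) \<in> W" using subsp_scale[OF insert.prems(4) fW] by simp
      then have "w0 \<in> W" unfolding w0_def using subsp_diff[OF insert.prems(4) w] by simp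
      moreover have "w0 a = 0" unfolding w0_def k_def using fa by simp
      ultimately have w0W: "w0 \<in> W0" unfolding W0_def by simp
      have "w = (\<lambda>v. w0 v + k * f v)" unfolding w0_def by auto
      then have "vinner U (\<lambda>v. x v - p v) w = vinner U (\<lambda>v. x v - p v) w0 + k * vinner U (\<lambda>v. x v - p v) f"
        by (metis vinner_add2 vinner_scale2)
      then show "vinner U (\<lambda>v. x v - p v) w = 0" using e0[OF w0W] e1 by simp
    qed
    then show ?thesis using pW by blast
  qed
qed

lemma oproj_char:
  assumes "finite V" "W \<subseteq> vecs V" "subsp W"
  shows "oproj V W x \<in> W \<and> (\<forall>w\<in>W. vinner V (\<lambda>v. x v - oproj V W x v) w = 0)"
proof -
  obtain p where "p \<in> W" "\<forall>w\<in>W. vinner V (\<lambda>v. x v - p v) w = 0"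
    using proj_exists_aux[OF assms(1) assms(1) _ assms(2,3)] by blast
  then show ?thesis using oproj_eq[OF assms] by simp
qed



definition adjs :: "'a set \<Rightarrow> ('a \<Rightarrow> 'a \<Rightarrow> bool) \<Rightarrow> ('a \<Rightarrow> real) \<Rightarrow> 'a \<Rightarrow> real" where
  "adjs V E y u = (\<Sum>v\<in>V. (if E u v then 1 else 0) * y v)"

definition ssum :: "nat \<Rightarrow> (nat \<times> 'a \<Rightarrow> real) \<Rightarrow> 'a \<Rightarrow> real" where
  "ssum n x v = (\<Sum>m\<in>{0..<n}. x (m, v))"

lemma adjs_scale: "adjs V E (\<lambda>v. c * y v) u = c * adjs V E y u"
  by (simp add: adjs_def sum_distrib_left algebra_simps)

lemma sum_delta_mult:
  assumes "finite V" "u \<in> V"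
  shows "(\<Sum>v\<in>V. (if u = v then c else 0) * y v) = (c::real) * y u"
proof -
  have "(\<Sum>v\<in>V. (if u = v then c else 0) * y v) = (\<Sum>v\<in>V. if u = v then c * y v else 0)"
    by (rule sum.cong) auto
  also have "\<dots> = c * y u" using assms by simp
  finally show ?thesis .
qed

lemma lap_mult_G:
  assumes "finite V" "u \<in> V"
  shows "lap_mult V E y u = real (degree V E u) * y u - adjs V E y u"
proof -
  have "lap_mult V E y u = (\<Sum>v\<in>V. (if u = v then real (degree V E u) else 0) * y v
      - (if E u v then 1 else 0) * y v)"
    using assms(2) unfolding lap_mult_def laplacian_def by (simp add: left_diff_distrib)
  also have "\<dots> = (\<Sum>v\<in>V. (if u = v then real (degree V E u) else 0) * y v) - adjs V E y u"
    by (simp add: sum_subtractf adjs_def)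
  finally show ?thesis using sum_delta_mult[OF assms] by simp
qed

lemma eig_G:
  assumes "finite V"
  shows "y \<in> eigenspace V E mu \<longleftrightarrow> y \<in> vecs V \<and>
     (\<forall>u\<in>V. real (degree V E u) * y u - adjs V E y u = mu * y u)"
proof
  assume h: "y \<in> eigenspace V E mu"
  then have "y \<in> vecs V" "lap_mult V E y = (\<lambda>u. mu * y u)" by (auto simp: eigenspace_def)
  then show "y \<in> vecs V \<and> (\<forall>u\<in>V. real (degree V E u) * y u - adjs V E y u = mu * y u)"
    using lap_mult_G[OF assms] by metis
next
  assume h: "y \<in> vecs V \<and> (\<forall>u\<in>V. real (degree V E u) * y u - adjs V E y u = mu * y u)"
  have "lap_mult V E y u = mu * y u" for u
  proof (cases "u \<in> V")
    case True then show ?thesis using h lap_mult_G[OF assms True] by simp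
  next
    case False then show ?thesis using h unfolding lap_mult_def vecs_def by simp
  qed
  then show "y \<in> eigenspace V E mu" using h unfolding eigenspace_def by auto
qed

lemma eig_sub: "eigenspace V E mu \<subseteq> vecs V" by (auto simp: eigenspace_def)

lemma eig_subsp: "subsp (eigenspace V E mu)"
proof -
  have add: "lap_mult V E (\<lambda>v. a v + b v) = (\<lambda>u. lap_mult V E a u + lap_mult V E b u)" for a b
    by (auto simp: lap_mult_def sum.distrib distrib_left)
  have sc: "lap_mult V E (\<lambda>v. c * a v) = (\<lambda>u. c * lap_mult V E a u)" for a c
    by (auto simp: lap_mult_def sum_distrib_left algebra_simps)
  have z: "lap_mult V E (\<lambda>_. 0) = (\<lambda>_. 0)" by (auto simp: lap_mult_def)
  show ?thesis unfolding subsp_def eigenspace_def vecs_def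
    by (auto simp: add sc z algebra_simps)
qed

lemma sum_blow:
  assumes "finite V"
  shows "(\<Sum>q\<in>{0..<n} \<times> V. f q) = (\<Sum>v\<in>V. \<Sum>m\<in>{0..<n}. f (m, v))"
proof -
  have "(\<Sum>q\<in>{0..<n} \<times> V. f q) = (\<Sum>m\<in>{0..<n}. \<Sum>v\<in>V. f (m, v))"
    by (simp add: sum.cartesian_product)
  also have "\<dots> = (\<Sum>v\<in>V. \<Sum>m\<in>{0..<n}. f (m, v))" by (rule sum.swap)
  finally show ?thesis .
qed

lemma degree_blow:
  assumes "simple_graph V E" "l < n" "u \<in> V"
  shows "degree (blowup_V n V) (blowup_E n E) (l, u) = n * degree V E u"
proof -
  have "{q \<in> blowup_V n V. blowup_E n E (l, u) q} = {0..<n} \<times> {v \<in> V. E u v}"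
    using assms unfolding blowup_V_def blowup_E_def by auto
  then show ?thesis unfolding degree_def by (simp add: card_cartesian_product)
qed

lemma lap_mult_blow:
  assumes "simple_graph V E" "l < n" "u \<in> V"
  shows "lap_mult (blowup_V n V) (blowup_E n E) x (l, u)
     = real n * real (degree V E u) * x (l, u) - adjs V E (ssum n x) u"
proof -
  have fin: "finite V" using assms(1) unfolding simple_graph_def by simp
  have finb: "finite (blowup_V n V)" using fin unfolding blowup_V_def by simp
  have lu: "(l, u) \<in> blowup_V n V" using assms unfolding blowup_V_def by simp
  have "lap_mult (blowup_V n V) (blowup_E n E) x (l, u) =
     (\<Sum>q\<in>blowup_V n V. (if (l, u) = q then real n * real (degree V E u) else 0) * x q
      - (if E u (snd q) then 1 else 0) * x q)"
    unfolding lap_mult_def laplacian_def using lu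
    apply (simp add: left_diff_distrib)
    apply (rule sum.cong, simp)
    using assms degree_blow[OF assms] by (auto simp: blowup_V_def blowup_E_def)
  also have "\<dots> = (\<Sum>q\<in>blowup_V n V. (if (l, u) = q then real n * real (degree V E u) else 0) * x q)
      - (\<Sum>q\<in>blowup_V n V. (if E u (snd q) then 1 else 0) * x q)"
    by (simp add: sum_subtractf)
  also have "(\<Sum>q\<in>blowup_V n V. (if (l, u) = q then real n * real (degree V E u) else 0) * x q)
     = real n * real (degree V E u) * x (l, u)"
    by (rule sum_delta_mult[OF finb lu])
  also have "(\<Sum>q\<in>blowup_V n V. (if E u (snd q) then 1 else 0) * x q)
     = (\<Sum>v\<in>V. \<Sum>m\<in>{0..<n}. (if E u v then 1 else 0) * x (m, v))"
    unfolding blowup_V_def using sum_blow[OF fin, of "\<lambda>q. (if E u (snd q) then 1 else 0) * x q" n] by simp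
  also have "\<dots> = adjs V E (ssum n x) u"
    unfolding adjs_def ssum_def by (simp add: sum_distrib_left)
  finally show ?thesis .
qed

lemma eig_blow:
  assumes "simple_graph V E"
  shows "x \<in> eigenspace (blowup_V n V) (blowup_E n E) mu \<longleftrightarrow> x \<in> vecs (blowup_V n V) \<and>
     (\<forall>l<n. \<forall>u\<in>V. real n * real (degree V E u) * x (l, u) - adjs V E (ssum n x) u = mu * x (l, u))"
proof
  assume h: "x \<in> eigenspace (blowup_V n V) (blowup_E n E) mu"
  then have "x \<in> vecs (blowup_V n V)" "lap_mult (blowup_V n V) (blowup_E n E) x = (\<lambda>u. mu * x u)"
    by (auto simp: eigenspace_def)
  then show "x \<in> vecs (blowup_V n V) \<and> (\<forall>l<n. \<forall>u\<in>V. real n * real (degree V E u) * x (l, u)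
     - adjs V E (ssum n x) u = mu * x (l, u))"
    using lap_mult_blow[OF assms] by metis
next
  assume h: "x \<in> vecs (blowup_V n V) \<and> (\<forall>l<n. \<forall>u\<in>V. real n * real (degree V E u) * x (l, u)
     - adjs V E (ssum n x) u = mu * x (l, u))"
  have "lap_mult (blowup_V n V) (blowup_E n E) x q = mu * x q" for q
  proof (cases "q \<in> blowup_V n V")
    case True
    then obtain l u where q: "q = (l, u)" "l < n" "u \<in> V" unfolding blowup_V_def by auto
    then show ?thesis using h lap_mult_blow[OF assms q(2,3)] by simp
  next
    case False
    moreover obtain a b where "q = (a, b)" by (cases q)
    ultimately show ?thesis using h unfolding lap_mult_def vecs_def by simp
  qed
  then show "x \<in> eigenspace (blowup_V n V) (blowup_E n E) mu" using h unfolding eigenspace_def by auto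
qed



lemma ssum_eig:
  assumes g: "simple_graph V E" and n: "n > 0"
    and x: "x \<in> eigenspace (blowup_V n V) (blowup_E n E) mu"
  shows "ssum n x \<in> eigenspace V E (mu / real n)"
proof -
  have fin: "finite V" using g unfolding simple_graph_def by simp
  have xv: "x \<in> vecs (blowup_V n V)" and eq: "\<forall>l<n. \<forall>u\<in>V. real n * real (degree V E u) * x (l, u)
     - adjs V E (ssum n x) u = mu * x (l, u)" using x eig_blow[OF g] by auto
  have "ssum n x \<in> vecs V"
    using xv unfolding vecs_def ssum_def blowup_V_def by auto
  moreover have "real (degree V E u) * ssum n x u - adjs V E (ssum n x) u = mu / real n * ssum n x u"
    if u: "u \<in> V" for u
  proof -
    have "(\<Sum>l\<in>{0..<n}. real n * real (degree V E u) * x (l, u) - adjs V E (ssum n x) u)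
        = (\<Sum>l\<in>{0..<n}. mu * x (l, u))"
      using eq u by (intro sum.cong) auto
    then have "real n * real (degree V E u) * ssum n x u - real n * adjs V E (ssum n x) u = mu * ssum n x u"
      unfolding ssum_def by (simp add: sum_subtractf sum_distrib_left)
    then show ?thesis using n by (simp add: field_simps)
  qed
  ultimately show ?thesis using eig_G[OF fin] by blast
qed

definition lift :: "nat \<Rightarrow> ('a \<Rightarrow> real) \<Rightarrow> nat \<times> 'a \<Rightarrow> real" where
  "lift n y = (\<lambda>(l, w). if l < n then y w else 0)"

lemma ssum_lift: "ssum n (lift n y) = (\<lambda>v. real n * y v)"
  unfolding ssum_def lift_def by auto

lemma lift_eig:
  assumes g: "simple_graph V E" and y: "y \<in> eigenspace V E lam"
  shows "lift n y \<in> eigenspace (blowup_V n V) (blowup_E n E) (real n * lam)"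
proof -
  have fin: "finite V" using g unfolding simple_graph_def by simp
  have yv: "y \<in> vecs V" and eq: "\<forall>u\<in>V. real (degree V E u) * y u - adjs V E y u = lam * y u"
    using y eig_G[OF fin] by auto
  have "lift n y \<in> vecs (blowup_V n V)"
    using yv unfolding vecs_def lift_def blowup_V_def by auto
  moreover have "real n * real (degree V E u) * lift n y (l, u) - adjs V E (ssum n (lift n y)) u
      = real n * lam * lift n y (l, u)" if "l < n" "u \<in> V" for l u
  proof -
    have "real n * real (degree V E u) * y u - real n * adjs V E y u = real n * lam * y u"
      using eq that by (simp add: algebra_simps flip: right_diff_distrib)
    then show ?thesis using that by (simp only: ssum_lift adjs_scale) (simp add: lift_def)
  qed
  ultimately show ?thesis using eig_blow[OF g] by blast
qed

definition locv :: "nat \<Rightarrow> 'a \<Rightarrow> (nat \<Rightarrow> real) \<Rightarrow> nat \<times> 'a \<Rightarrow> real" where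
  "locv n u z = (\<lambda>(l, w). if l < n \<and> w = u then z l else 0)"

lemma locv_eig:
  assumes g: "simple_graph V E" and u: "u \<in> V" and z: "(\<Sum>l\<in>{0..<n}. z l) = 0"
  shows "locv n u z \<in> eigenspace (blowup_V n V) (blowup_E n E) (real n * real (degree V E u))"
proof -
  have s0: "ssum n (locv n u z) = (\<lambda>_. 0)"
  proof
    fix v show "ssum n (locv n u z) v = 0"
      using z unfolding ssum_def locv_def by (cases "v = u") auto
  qed
  have a0: "adjs V E (\<lambda>_. 0) w = 0" for w by (simp add: adjs_def)
  have "locv n u z \<in> vecs (blowup_V n V)"
    using u unfolding vecs_def locv_def blowup_V_def by auto
  moreover have "real n * real (degree V E w) * locv n u z (l, w) - adjs V E (ssum n (locv n u z)) w
      = real n * real (degree V E u) * locv n u z (l, w)" if "l < n" "w \<in> V" for l w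
    using that by (simp only: s0 a0) (simp add: locv_def)
  ultimately show ?thesis using eig_blow[OF g] by blast
qed

lemma spectrum_part:
  assumes g: "simple_graph V E" and n: "n \<ge> 2"
  shows "lap_spectrum (blowup_V n V) (blowup_E n E)
           = (\<lambda>x. real n * x) ` lap_spectrum V E \<union> {real n * real (degree V E u) | u. u \<in> V}"
proof (intro equalityI subsetI)
  fix mu assume "mu \<in> lap_spectrum (blowup_V n V) (blowup_E n E)"
  then obtain x where x: "x \<in> eigenspace (blowup_V n V) (blowup_E n E) mu" "x \<noteq> (\<lambda>_. 0)"
    unfolding lap_spectrum_def by auto
  have fin: "finite V" using g unfolding simple_graph_def by simp
  have xv: "x \<in> vecs (blowup_V n V)" and eq: "\<forall>l<n. \<forall>u\<in>V. real n * real (degree V E u) * x (l, u)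
     - adjs V E (ssum n x) u = mu * x (l, u)" using x eig_blow[OF g] by auto
  show "mu \<in> (\<lambda>x. real n * x) ` lap_spectrum V E \<union> {real n * real (degree V E u) | u. u \<in> V}"
  proof (cases "ssum n x = (\<lambda>_. 0)")
    case False
    have "ssum n x \<in> eigenspace V E (mu / real n)" using ssum_eig[OF g _ x(1)] n by simp
    then have "mu / real n \<in> lap_spectrum V E" using False unfolding lap_spectrum_def by blast
    moreover have "mu = real n * (mu / real n)" using n by simp
    ultimately show ?thesis by blast
  next
    case True
    obtain q where q: "x q \<noteq> 0" using x(2) by (meson ext)
    obtain l u where lu: "q = (l, u)" by (cases q)
    have "q \<in> blowup_V n V" using q xv unfolding vecs_def by blast
    then have l: "l < n" and u: "u \<in> V" using lu unfolding blowup_V_def by auto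
    have "real n * real (degree V E u) * x (l, u) = mu * x (l, u)"
      using eq l u True by (simp add: adjs_def)
    then have "mu = real n * real (degree V E u)" using q lu by simp
    then show ?thesis using u by blast
  qed
next
  fix mu assume "mu \<in> (\<lambda>x. real n * x) ` lap_spectrum V E \<union> {real n * real (degree V E u) | u. u \<in> V}"
  then consider lam where "lam \<in> lap_spectrum V E" "mu = real n * lam"
    | u where "u \<in> V" "mu = real n * real (degree V E u)" by blast
  then show "mu \<in> lap_spectrum (blowup_V n V) (blowup_E n E)"
  proof cases
    case 1
    then obtain y where y: "y \<in> eigenspace V E lam" "y \<noteq> (\<lambda>_. 0)" unfolding lap_spectrum_def by auto
    obtain w where w: "y w \<noteq> 0" using y(2) by (meson ext)
    have "lift n y (0, w) \<noteq> 0" using w n by (simp add: lift_def)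
    then have "lift n y \<noteq> (\<lambda>_. 0)" by (metis)
    then show ?thesis using lift_eig[OF g y(1), of n] 1 unfolding lap_spectrum_def by blast
  next
    case 2
    define z where "z = (\<lambda>l::nat. if l = 0 then 1 else if l = 1 then -1 else (0::real))"
    have "(\<Sum>l\<in>{0..<n}. z l) = (\<Sum>l\<in>{0..<n}. (if l = 0 then 1 else 0) + (if l = 1 then -1 else (0::real)))"
      by (rule sum.cong) (auto simp: z_def)
    also have "\<dots> = 0" using n by (simp add: sum.distrib)
    finally have zs: "(\<Sum>l\<in>{0..<n}. z l) = 0" .
    have "locv n u z (0, u) \<noteq> 0" using n by (simp add: locv_def z_def)
    then have "locv n u z \<noteq> (\<lambda>_. 0)" by metis
    then show ?thesis using locv_eig[OF g 2(1) zs] 2 unfolding lap_spectrum_def by blast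
  qed
qed



lemma vinner_unit:
  assumes "finite U" "a \<in> U" shows "vinner U (unit_vec a) z = z a"
proof -
  have "vinner U (unit_vec a) z = (\<Sum>v\<in>U. (if a = v then 1 else 0) * z v)"
    unfolding vinner_def unit_vec_def by (rule sum.cong) auto
  then show ?thesis using sum_delta_mult[OF assms, of 1 z] by simp
qed

lemma proj_blow:
  fixes mu :: real
  assumes g: "simple_graph V E" and n: "n \<ge> 2" and u: "u \<in> V" and j: "j < n"
  defines "P \<equiv> oproj V (eigenspace V E (mu / real n)) (unit_vec u)"
  defines "q1 \<equiv> lift n (\<lambda>w. (1 / real n) * P w)"
  defines "x2 \<equiv> locv n u (\<lambda>l. (if l = j then 1 else 0) - 1 / real n)"
  defines "q \<equiv> (if real n * real (degree V E u) = mu then (\<lambda>p. q1 p + x2 p) else q1)"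
  shows "oproj (blowup_V n V) (eigenspace (blowup_V n V) (blowup_E n E) mu) (unit_vec (j, u)) = q"
proof -
  have fin: "finite V" using g unfolding simple_graph_def by simp
  have finb: "finite (blowup_V n V)" using fin unfolding blowup_V_def by simp
  have ju: "(j, u) \<in> blowup_V n V" using j u unfolding blowup_V_def by simp
  have n0: "real n > 0" using n by simp
  have Pc: "P \<in> eigenspace V E (mu / real n) \<and>
     (\<forall>w\<in>eigenspace V E (mu / real n). vinner V (\<lambda>v. unit_vec u v - P v) w = 0)"
    unfolding P_def using oproj_char[OF fin eig_sub eig_subsp] by blast
  have "(\<lambda>w. (1 / real n) * P w) \<in> eigenspace V E (mu / real n)"
    using subsp_scale[OF eig_subsp] Pc by blast
  then have q1e: "q1 \<in> eigenspace (blowup_V n V) (blowup_E n E) mu"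
    unfolding q1_def using lift_eig[OF g, of _ "mu / real n" n] n0 by simp
  have zs: "(\<Sum>l\<in>{0..<n}. (if l = j then 1 else 0) - 1 / real n) = 0"
    using j n0 by (simp add: sum_subtractf)
  have x2e: "x2 \<in> eigenspace (blowup_V n V) (blowup_E n E) (real n * real (degree V E u))"
    unfolding x2_def using locv_eig[OF g u zs] .
  have qe: "q \<in> eigenspace (blowup_V n V) (blowup_E n E) mu"
    unfolding q_def using q1e x2e subsp_add[OF eig_subsp q1e] by auto
  have orth: "vinner (blowup_V n V) (\<lambda>p. unit_vec (j, u) p - q p) z = 0"
    if z: "z \<in> eigenspace (blowup_V n V) (blowup_E n E) mu" for z
  proof -
    define s where "s = ssum n z"
    have se: "s \<in> eigenspace V E (mu / real n)" unfolding s_def using ssum_eig[OF g _ z] n by simp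
    have "vinner V (\<lambda>v. unit_vec u v - P v) s = 0" using Pc se by blast
    then have su: "s u = vinner V P s" by (simp only: vinner_diff vinner_unit[OF fin u])
    have a: "vinner (blowup_V n V) (unit_vec (j, u)) z = z (j, u)" using vinner_unit[OF finb ju] .
    have b: "vinner (blowup_V n V) q1 z = (1 / real n) * vinner V P s"
    proof -
      have "vinner (blowup_V n V) q1 z = (\<Sum>v\<in>V. \<Sum>m\<in>{0..<n}. q1 (m, v) * z (m, v))"
        unfolding vinner_def blowup_V_def using sum_blow[OF fin, of "\<lambda>p. q1 p * z p" n] by simp
      also have "\<dots> = (\<Sum>v\<in>V. (1 / real n) * (P v * s v))"
        unfolding q1_def lift_def s_def ssum_def by (simp add: sum_distrib_left)
      also have "\<dots> = (1 / real n) * vinner V P s" by (simp add: vinner_def sum_distrib_left)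
      finally show ?thesis .
    qed
    have c: "vinner (blowup_V n V) x2 z = z (j, u) - s u / real n"
    proof -
      have "vinner (blowup_V n V) x2 z = (\<Sum>v\<in>V. \<Sum>m\<in>{0..<n}. x2 (m, v) * z (m, v))"
        unfolding vinner_def blowup_V_def using sum_blow[OF fin, of "\<lambda>p. x2 p * z p" n] by simp
      also have "\<dots> = (\<Sum>v\<in>V. (if u = v then 1 else 0) *
          (\<Sum>m\<in>{0..<n}. ((if m = j then 1 else 0) - 1 / real n) * z (m, u)))"
        unfolding x2_def locv_def by (rule sum.cong) auto
      also have "\<dots> = (\<Sum>m\<in>{0..<n}. ((if m = j then 1 else 0) - 1 / real n) * z (m, u))"
        using sum_delta_mult[OF fin u] by simp
      also have "\<dots> = (\<Sum>m\<in>{0..<n}. (if m = j then 1 else 0) * z (m, u)) - (\<Sum>m\<in>{0..<n}. z (m, u) / real n)"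
        by (simp only: left_diff_distrib sum_subtractf) simp
      also have "(\<Sum>m\<in>{0..<n}. (if m = j then 1 else 0) * z (m, u)) = (\<Sum>m\<in>{0..<n}. (if j = m then 1 else 0) * z (m, u))"
        by (rule sum.cong) auto
      also have "\<dots> = z (j, u)" using sum_delta_mult[of "{0..<n}" j 1 "\<lambda>m. z (m, u)"] j by simp
      also have "(\<Sum>m\<in>{0..<n}. z (m, u) / real n) = s u / real n"
        by (simp add: s_def ssum_def sum_divide_distrib)
      finally show ?thesis .
    qed
    show ?thesis
    proof (cases "real n * real (degree V E u) = mu")
      case True
      have "vinner (blowup_V n V) (\<lambda>p. unit_vec (j, u) p - q p) z
          = vinner (blowup_V n V) (unit_vec (j, u)) z - (vinner (blowup_V n V) q1 z + vinner (blowup_V n V) x2 z)"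
      proof -
        have "q = (\<lambda>p. q1 p + x2 p)" unfolding q_def using True by simp
        then show ?thesis by (simp only: vinner_diff vinner_add)
      qed
      then show ?thesis using a b c su n0 by simp
    next
      case False
      have eq: "\<forall>l<n. \<forall>w\<in>V. real n * real (degree V E w) * z (l, w) - adjs V E s w = mu * z (l, w)"
        using z eig_blow[OF g] unfolding s_def by auto
      define K where "K = adjs V E s u / (real n * real (degree V E u) - mu)"
      have zK: "z (l, u) = K" if "l < n" for l
      proof -
        have "(real n * real (degree V E u) - mu) * z (l, u) = adjs V E s u"
          using eq that u by (simp add: algebra_simps)
        then show ?thesis unfolding K_def using False by (simp add: field_simps)
      qed
      have "s u = real n * K" unfolding s_def ssum_def using zK by simp
      then have "s u = real n * z (j, u)" using zK[OF j] by simp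
      moreover have "vinner (blowup_V n V) (\<lambda>p. unit_vec (j, u) p - q p) z
          = vinner (blowup_V n V) (unit_vec (j, u)) z - vinner (blowup_V n V) q1 z"
      proof -
        have "q = q1" unfolding q_def using False by simp
        then show ?thesis by (simp only: vinner_diff)
      qed
      ultimately show ?thesis using a b su n0 by simp
    qed
  qed
  show ?thesis
    using oproj_eq[OF finb eig_sub eig_subsp qe] orth by blast
qed



lemma support_part:
  assumes g: "simple_graph V E" and n: "n \<ge> 2" and u: "u \<in> V" and j: "j < n"
  shows "eig_support (blowup_V n V) (blowup_E n E) (j, u)
           = (\<lambda>x. real n * x) ` eig_support V E u \<union> {real n * real (degree V E u)}"
proof -
  have n0: "real n > 0" using n by simp
  define P where "P mu = oproj V (eigenspace V E (mu / real n)) (unit_vec u)" for mu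
  have key: "oproj (blowup_V n V) (eigenspace (blowup_V n V) (blowup_E n E) mu) (unit_vec (j, u)) \<noteq> (\<lambda>_. 0)
     \<longleftrightarrow> P mu \<noteq> (\<lambda>_. 0) \<or> real n * real (degree V E u) = mu" for mu
  proof -
    define q1 where "q1 = lift n (\<lambda>w. (1 / real n) * P mu w)"
    define x2 where "x2 = locv n u (\<lambda>l. (if l = j then 1 else 0) - 1 / real n)"
    have pe: "oproj (blowup_V n V) (eigenspace (blowup_V n V) (blowup_E n E) mu) (unit_vec (j, u))
       = (if real n * real (degree V E u) = mu then (\<lambda>p. q1 p + x2 p) else q1)"
      unfolding q1_def x2_def P_def using proj_blow[OF g n u j, of mu] by simp
    show ?thesis
    proof (cases "real n * real (degree V E u) = mu")
      case True
      define j' where "j' = (if j = 0 then 1 else (0::nat))"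
      have j': "j' < n" "j' \<noteq> j" using n unfolding j'_def by auto
      have "(\<lambda>p. q1 p + x2 p) (j, u) - (\<lambda>p. q1 p + x2 p) (j', u) = 1"
        using j j' unfolding q1_def x2_def lift_def locv_def by simp
      then have "(\<lambda>p. q1 p + x2 p) \<noteq> (\<lambda>_. 0)" by (metis diff_self zero_neq_one)
      then show ?thesis using pe True by simp
    next
      case False
      have "q1 \<noteq> (\<lambda>_. 0) \<longleftrightarrow> P mu \<noteq> (\<lambda>_. 0)"
      proof
        assume "q1 \<noteq> (\<lambda>_. 0)"
        then obtain p where "q1 p \<noteq> 0" by (meson ext)
        moreover obtain l w where "p = (l, w)" by (cases p)
        ultimately have "P mu w \<noteq> 0" unfolding q1_def lift_def by (auto split: if_splits)
        then show "P mu \<noteq> (\<lambda>_. 0)" by auto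
      next
        assume "P mu \<noteq> (\<lambda>_. 0)"
        then obtain w where "P mu w \<noteq> 0" by (meson ext)
        then have "q1 (0, w) \<noteq> 0" using n0 n unfolding q1_def lift_def by simp
        then show "q1 \<noteq> (\<lambda>_. 0)" by metis
      qed
      then show ?thesis using pe False by simp
    qed
  qed
  have Pe: "P mu \<in> eigenspace V E (mu / real n)" for mu
  proof -
    have fin: "finite V" using g unfolding simple_graph_def by simp
    show ?thesis unfolding P_def using oproj_char[OF fin eig_sub eig_subsp] by blast
  qed
  note spec = spectrum_part[OF g n]
  show ?thesis
  proof (intro equalityI subsetI)
    fix mu assume "mu \<in> eig_support (blowup_V n V) (blowup_E n E) (j, u)"
    then have m1: "mu \<in> lap_spectrum (blowup_V n V) (blowup_E n E)"
      and m2: "P mu \<noteq> (\<lambda>_. 0) \<or> real n * real (degree V E u) = mu"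
      unfolding eig_support_def using key by auto
    show "mu \<in> (\<lambda>x. real n * x) ` eig_support V E u \<union> {real n * real (degree V E u)}"
    proof (cases "P mu \<noteq> (\<lambda>_. 0)")
      case True
      then have "mu / real n \<in> lap_spectrum V E" using Pe unfolding lap_spectrum_def by blast
      then have "mu / real n \<in> eig_support V E u" using True unfolding eig_support_def P_def by simp
      moreover have "mu = real n * (mu / real n)" using n0 by simp
      ultimately show ?thesis by blast
    next
      case False then show ?thesis using m2 by simp
    qed
  next
    fix mu assume "mu \<in> (\<lambda>x. real n * x) ` eig_support V E u \<union> {real n * real (degree V E u)}"
    then consider lam where "lam \<in> eig_support V E u" "mu = real n * lam"
      | "mu = real n * real (degree V E u)" by blast
    then show "mu \<in> eig_support (blowup_V n V) (blowup_E n E) (j, u)"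
    proof cases
      case 1
      have lamn: "mu / real n = lam" using 1 n0 by simp
      have "lam \<in> lap_spectrum V E" "oproj V (eigenspace V E lam) (unit_vec u) \<noteq> (\<lambda>_. 0)"
        using 1 unfolding eig_support_def by auto
      then have "mu \<in> lap_spectrum (blowup_V n V) (blowup_E n E)" "P mu \<noteq> (\<lambda>_. 0)"
        using spec 1 lamn unfolding P_def by auto
      then show ?thesis unfolding eig_support_def using key by auto
    next
      case 2
      have "mu \<in> lap_spectrum (blowup_V n V) (blowup_E n E)" using spec 2 u by auto
      then show ?thesis unfolding eig_support_def using key 2 by auto
    qed
  qed
qed

theorem proposition2:
  fixes V :: "'a set" and E :: "'a \<Rightarrow> 'a \<Rightarrow> bool" and n :: nat
  assumes "simple_graph V E" and "n \<ge> 2"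
  shows "lap_spectrum (blowup_V n V) (blowup_E n E)
           = (\<lambda>x. real n * x) ` lap_spectrum V E \<union> {real n * real (degree V E u) | u. u \<in> V}
       \<and> (\<forall>u \<in> V. \<forall>j < n. eig_support (blowup_V n V) (blowup_E n E) (j, u)
           = (\<lambda>x. real n * x) ` eig_support V E u \<union> {real n * real (degree V E u)})"
  using spectrum_part[OF assms] support_part[OF assms] by blast

end
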